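(* Let $I\subset K[x_1,\ldots,x_n]$ be a monomial ideal which is componentwise polymatroidal with strong exchange property. Then $I$ has linear quotients.
   Context: $G(I)$ = minimal monomial generating set; $\deg_{x_i}(u)$ = exponent of $x_i$ in $u$. A monomial ideal generated in a single degree is polymatroidal if for all $u,v\in G(I)$ and all $i$ with $\deg_{x_i}(u)>\deg_{x_i}(v)$ there exists $j$ with $\deg_{x_j}(u)<\deg_{x_j}(v)$ and $x_j(u/x_i)\in I$. A polymatroidal ideal $I$ satisfies the strong exchange property if for all $u,v\in G(I)$ and all $i,j$ with $\deg_{x_i}(u)>\deg_{x_i}(v)$ and $\deg_{x_j}(u)<\deg_{x_j}(v)$, one has $x_j(u/x_i)\in I$. $I_{\langle j\rangle}$ is the ideal generated by all degree-$j$ monomials in $I$; $I$ is componentwise polymatroidal with strong exchange property if every nonzero $I_{\langle j\rangle}$ is polymatroidal with the strong exchange property. A monomial ideal has linear quotients if there is an ordering $v_1,\ldots,v_r$ of $G(I)$ such that each $(v_1,\ldots,v_{i-1}):v_i$, $i\ge 2$, is generated by a subset of the variables. *)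

theory Defs
  imports Main
begin

text \<open>Monomials in K[x_0,...,x_{n-1}] are represented by exponent vectors
  u :: nat \<Rightarrow> nat with u i = 0 for i \<ge> n.  A monomial ideal I is represented by
  the set of monomials it contains (which determines it, since I is spanned over K by them).\<close>

type_synonym monomial = "nat \<Rightarrow> nat"

definition mons :: "nat \<Rightarrow> monomial set" where
  "mons n = {u. \<forall>i\<ge>n. u i = 0}"

definition mmul :: "monomial \<Rightarrow> monomial \<Rightarrow> monomial" where
  "mmul u v = (\<lambda>i. u i + v i)"

definition mdvd :: "monomial \<Rightarrow> monomial \<Rightarrow> bool" where
  "mdvd u v \<longleftrightarrow> (\<forall>i. u i \<le> v i)"

definition mdeg :: "nat \<Rightarrow> monomial \<Rightarrow> nat" where
  "mdeg n u = (\<Sum>i<n. u i)"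

definition mulvar :: "nat \<Rightarrow> monomial \<Rightarrow> monomial" where
  "mulvar j u = u(j := Suc (u j))"

definition divvar :: "nat \<Rightarrow> monomial \<Rightarrow> monomial" where
  "divvar i u = u(i := u i - 1)"

definition monomial_ideal :: "nat \<Rightarrow> monomial set \<Rightarrow> bool" where
  "monomial_ideal n M \<longleftrightarrow> M \<subseteq> mons n \<and> (\<forall>u\<in>M. \<forall>w\<in>mons n. mmul u w \<in> M)"

definition gens :: "monomial set \<Rightarrow> monomial set" where
  "gens M = {u\<in>M. \<forall>v\<in>M. mdvd v u \<longrightarrow> v = u}"

definition comp :: "nat \<Rightarrow> monomial set \<Rightarrow> nat \<Rightarrow> monomial set" where
  "comp n M j = {w\<in>mons n. \<exists>u\<in>M. mdeg n u = j \<and> mdvd u w}"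

definition polymatroidal :: "nat \<Rightarrow> monomial set \<Rightarrow> bool" where
  "polymatroidal n M \<longleftrightarrow>
     (\<exists>d. \<forall>u\<in>gens M. mdeg n u = d) \<and>
     (\<forall>u\<in>gens M. \<forall>v\<in>gens M. \<forall>i<n. u i > v i \<longrightarrow>
        (\<exists>j<n. u j < v j \<and> mulvar j (divvar i u) \<in> M))"

definition strong_exchange :: "nat \<Rightarrow> monomial set \<Rightarrow> bool" where
  "strong_exchange n M \<longleftrightarrow> polymatroidal n M \<and>
     (\<forall>u\<in>gens M. \<forall>v\<in>gens M. \<forall>i<n. \<forall>j<n. u i > v i \<longrightarrow> u j < v j \<longrightarrow>
        mulvar j (divvar i u) \<in> M)"

definition componentwise_polymatroidal_sep :: "nat \<Rightarrow> monomial set \<Rightarrow> bool" where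
  "componentwise_polymatroidal_sep n M \<longleftrightarrow>
     (\<forall>j. comp n M j \<noteq> {} \<longrightarrow> strong_exchange n (comp n M j))"

text \<open>monomials of the colon ideal (v_0,...,v_{k-1}) : v_k\<close>
definition colon_prefix :: "nat \<Rightarrow> monomial list \<Rightarrow> nat \<Rightarrow> monomial set" where
  "colon_prefix n vs k = {w\<in>mons n. \<exists>l<k. mdvd (vs ! l) (mmul w (vs ! k))}"

definition var_ideal :: "nat \<Rightarrow> nat set \<Rightarrow> monomial set" where
  "var_ideal n S = {w\<in>mons n. \<exists>j\<in>S. w j \<ge> 1}"

definition linear_quotients :: "nat \<Rightarrow> monomial set \<Rightarrow> bool" where
  "linear_quotients n M \<longleftrightarrow>
     (\<exists>vs. distinct vs \<and> set vs = gens M \<and>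
        (\<forall>k. 0 < k \<and> k < length vs \<longrightarrow>
           (\<exists>S\<subseteq>{..<n}. colon_prefix n vs k = var_ideal n S)))"

end

theory Submission
  imports Defs "HOL-Library.List_Lexorder" "HOL-Library.Product_Lexorder"
begin

definition exch :: "nat \<Rightarrow> nat \<Rightarrow> monomial \<Rightarrow> monomial" where
  "exch i j u = mulvar j (divvar i u)"

lemma exch_apply:
  "i \<noteq> j \<Longrightarrow> exch i j u k = (if k = j then Suc (u j) else if k = i then u i - 1 else u k)"
  by (auto simp: exch_def mulvar_def divvar_def)

lemma mons_iff: "u \<in> mons n \<longleftrightarrow> (\<forall>i\<ge>n. u i = 0)"
  by (simp add: mons_def)

lemma exch_mons: "u \<in> mons n \<Longrightarrow> i < n \<Longrightarrow> j < n \<Longrightarrow> exch i j u \<in> mons n"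
  by (auto simp: mons_def exch_def mulvar_def divvar_def)

lemma mdeg_int_upd:
  assumes "k < n"
  shows "int (mdeg n (u(k := x))) = int (mdeg n u) - int (u k) + int x"
proof -
  have "mdeg n (u(k := x)) = x + (\<Sum>i\<in>{..<n} - {k}. u i)"
    unfolding mdeg_def using assms
    by (subst sum.remove[of _ k]) (auto intro!: sum.cong)
  moreover have "mdeg n u = u k + (\<Sum>i\<in>{..<n} - {k}. u i)"
    unfolding mdeg_def using assms by (subst sum.remove[of _ k]) auto
  ultimately show ?thesis by simp
qed

lemma mdeg_exch:
  assumes "i < n" "j < n" "i \<noteq> j" "u i \<ge> 1"
  shows "mdeg n (exch i j u) = mdeg n u"
proof -
  have e: "exch i j u = (u(i := u i - 1))(j := Suc (u j))"
    using assms by (auto simp: exch_def mulvar_def divvar_def)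
  have "int (mdeg n (exch i j u)) = int (mdeg n u)"
    unfolding e using assms
    by (simp add: mdeg_int_upd of_nat_diff)
  then show ?thesis by simp
qed

lemma mdvd_refl[simp]: "mdvd u u" by (simp add: mdvd_def)
lemma mdvd_trans: "mdvd a b \<Longrightarrow> mdvd b c \<Longrightarrow> mdvd a c"
  unfolding mdvd_def using le_trans by blast

lemma mdeg_mono: "mdvd a b \<Longrightarrow> mdeg n a \<le> mdeg n b"
  unfolding mdeg_def mdvd_def by (simp add: sum_mono)

lemma mdvd_mons:
  assumes "mdvd a b" "b \<in> mons n" shows "a \<in> mons n"
proof -
  { fix i assume "i \<ge> n"
    then have "b i = 0" using assms(2) by (simp add: mons_def)
    moreover have "a i \<le> b i" using assms(1) by (simp add: mdvd_def)
    ultimately have "a i = 0" by simp }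
  thus ?thesis by (simp add: mons_def)
qed

lemma mdvd_eq_deg:
  assumes "mdvd a b" "b \<in> mons n" "mdeg n a = mdeg n b"
  shows "a = b"
proof (rule ccontr)
  assume "a \<noteq> b"
  then obtain k where k: "a k \<noteq> b k" by auto
  have "k < n"
  proof (rule ccontr)
    assume "\<not> k < n"
    then have "b k = 0" using assms(2) by (simp add: mons_def)
    moreover have "a k \<le> b k" using assms(1) unfolding mdvd_def by blast
    ultimately show False using k by simp
  qed
  have "a k < b k" using k assms(1) unfolding mdvd_def by (simp add: order_le_neq_trans)
  then have "mdeg n a < mdeg n b" unfolding mdeg_def
    using assms(1) \<open>k<n\<close> unfolding mdvd_def
    by (intro sum_strict_mono_ex1) auto
  then show False using assms(3) by simp
qed

lemma mdvd_neq_deg: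
  assumes "mdvd a b" "b \<in> mons n" "a \<noteq> b"
  shows "mdeg n a < mdeg n b"
  using mdvd_eq_deg[OF assms(1,2)] mdeg_mono[OF assms(1), of n] assms(3) by linarith

lemma intermediate:
  assumes "mdvd a c" "c \<in> mons n" "mdeg n a \<le> t" "t \<le> mdeg n c"
  shows "\<exists>u. mdvd a u \<and> mdvd u c \<and> mdeg n u = t"
  using assms
proof (induction "mdeg n c - t" arbitrary: c)
  case 0
  then show ?case by (intro exI[of _ c]) auto
next
  case (Suc x)
  have "a \<noteq> c" using Suc by auto
  then obtain k where "a k \<noteq> c k" by auto
  then have k: "a k < c k" using Suc(3) unfolding mdvd_def
    using le_neq_implies_less by blast
  have kn: "k < n"
  proof (rule ccontr)
    assume "\<not> k < n"
    then have "c k = 0" using Suc(4) by (simp add: mons_def)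
    then show False using k by simp
  qed
  define c' where "c' = c(k := c k - 1)"
  have d: "int (mdeg n c') = int (mdeg n c) - 1"
    unfolding c'_def using kn k by (simp add: mdeg_int_upd of_nat_diff)
  have 1: "mdvd a c'" using Suc(3) k unfolding c'_def mdvd_def by auto
  have "mdvd c' c" unfolding c'_def mdvd_def by auto
  have 2: "c' \<in> mons n" using Suc(4) unfolding c'_def mons_def by auto
  have 3: "x = mdeg n c' - t" using Suc.hyps(2) d by linarith
  have 4: "t \<le> mdeg n c'" using Suc.hyps(2) d by linarith
  obtain u where "mdvd a u" "mdvd u c'" "mdeg n u = t"
    using Suc.hyps(1)[OF 3 1 2 Suc.prems(3) 4] by blast
  then show ?case using \<open>mdvd c' c\<close> mdvd_trans by blast
qed

lemma antichain_fin_aux: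
  "finite S \<Longrightarrow> (\<forall>a\<in>A. \<forall>i. i \<notin> S \<longrightarrow> a i = 0) \<Longrightarrow>
   (\<forall>a\<in>A. \<forall>b\<in>A. mdvd a b \<longrightarrow> a = b) \<Longrightarrow> finite (A :: monomial set)"
proof (induction "card S" arbitrary: S A rule: less_induct)
  case less
  show ?case
  proof (cases "A = {}")
    case True then show ?thesis by simp
  next
    case False
    then obtain a where a: "a \<in> A" by auto
    define Aic where "Aic i c = {b\<in>A. b i = c}" for i c
    have sub: "A \<subseteq> insert a (\<Union>i\<in>S. \<Union>c\<in>{..<a i}. Aic i c)"
    proof
      fix b assume b: "b \<in> A"
      show "b \<in> insert a (\<Union>i\<in>S. \<Union>c\<in>{..<a i}. Aic i c)"
      proof (cases "b = a")
        case True then show ?thesis by simp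
      next
        case False
        then have "\<not> mdvd a b" using less.prems(3) a b by blast
        then obtain i where i: "b i < a i" unfolding mdvd_def by (auto simp: not_le)
        have "i \<in> S" using i less.prems(2) a by (metis not_less_zero)
        then show ?thesis using i b unfolding Aic_def by auto
      qed
    qed
    have fin: "finite (Aic i c)" if iS: "i \<in> S" for i c
    proof -
      define f where "f b = b(i := 0)" for b :: monomial
      have inj: "inj_on f (Aic i c)"
      proof (rule inj_onI)
        fix x y assume xy: "x \<in> Aic i c" "y \<in> Aic i c" "f x = f y"
        show "x = y"
        proof
          fix t
          show "x t = y t"
            using fun_cong[OF xy(3), of t] xy(1,2) by (cases "t = i") (auto simp: f_def Aic_def)
        qed
      qed
      have "finite (f ` Aic i c)"
      proof (rule less.hyps[of "S - {i}"])
        show "card (S - {i}) < card S" using iS less.prems(1) by (rule card_Diff1_less[rotated])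
        show "finite (S - {i})" using less.prems(1) by simp
        show "\<forall>a\<in>f ` Aic i c. \<forall>j. j \<notin> S - {i} \<longrightarrow> a j = 0"
          using less.prems(2) unfolding f_def Aic_def by auto
        show "\<forall>x\<in>f ` Aic i c. \<forall>y\<in>f ` Aic i c. mdvd x y \<longrightarrow> x = y"
        proof (intro ballI impI)
          fix x y assume x: "x \<in> f ` Aic i c" and y: "y \<in> f ` Aic i c" and xy: "mdvd x y"
          obtain bx where bx: "bx \<in> Aic i c" "x = f bx" using x by auto
          obtain by' where by': "by' \<in> Aic i c" "y = f by'" using y by auto
          have "mdvd bx by'"
            unfolding mdvd_def
          proof
            fix t
            show "bx t \<le> by' t"
              using xy bx by' unfolding mdvd_def
              by (cases "t = i") (auto simp: f_def Aic_def dest: spec[where x=t])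
          qed
          then have "bx = by'" using less.prems(3) bx by' unfolding Aic_def by blast
          then show "x = y" using bx by' by simp
        qed
      qed
      then show ?thesis using inj finite_imageD by blast
    qed
    have "finite (insert a (\<Union>i\<in>S. \<Union>c\<in>{..<a i}. Aic i c))"
      using fin less.prems(1) by (intro finite.insertI finite_UN_I) auto
    then show ?thesis using sub finite_subset by blast
  qed
qed

lemma antichain_fin:
  assumes "A \<subseteq> mons n" "\<forall>a\<in>A. \<forall>b\<in>A. mdvd a b \<longrightarrow> a = b"
  shows "finite A"
  by (rule antichain_fin_aux[of "{..<n}"]) (use assms in \<open>auto simp: mons_def\<close>)

lemma fin_bounded: "finite {a :: monomial. (\<forall>i\<ge>n. a i = 0) \<and> (\<forall>i. a i \<le> D)}"
proof -
  let ?F = "\<lambda>xs i. if i < n then xs ! i else (0::nat)"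
  have "{a :: monomial. (\<forall>i\<ge>n. a i = 0) \<and> (\<forall>i. a i \<le> D)} \<subseteq>
        ?F ` {xs. set xs \<subseteq> {..D} \<and> length xs = n}"
  proof
    fix a :: monomial assume a: "a \<in> {a. (\<forall>i\<ge>n. a i = 0) \<and> (\<forall>i. a i \<le> D)}"
    have "a = ?F (map a [0..<n])" using a by (auto simp: fun_eq_iff)
    moreover have "map a [0..<n] \<in> {xs. set xs \<subseteq> {..D} \<and> length xs = n}" using a by auto
    ultimately show "a \<in> ?F ` {xs. set xs \<subseteq> {..D} \<and> length xs = n}" by blast
  qed
  then show ?thesis
    by (rule finite_subset) (intro finite_imageI finite_lists_length_eq finite_atMost)
qed

lemma coord_le_mdeg: "i < n \<Longrightarrow> u i \<le> mdeg n u"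
  unfolding mdeg_def by (rule member_le_sum) auto

lemma fin_deg: "finite {a \<in> mons n. mdeg n a = d}"
proof -
  have "{a \<in> mons n. mdeg n a = d} \<subseteq> {a :: monomial. (\<forall>i\<ge>n. a i = 0) \<and> (\<forall>i. a i \<le> d)}"
  proof (intro subsetI CollectI conjI allI impI)
    fix a i assume a: "a \<in> {a \<in> mons n. mdeg n a = d}"
    show "a i \<le> d"
    proof (cases "i < n")
      case True then show ?thesis using a coord_le_mdeg[of i n a] by simp
    next
      case False then show ?thesis using a by (simp add: mons_def)
    qed
  next
    fix a i assume "a \<in> {a \<in> mons n. mdeg n a = d}" "n \<le> i"
    then show "a i = 0" by (simp add: mons_def)
  qed
  then show ?thesis by (rule finite_subset) (rule fin_bounded)
qed

definition gdeg :: "nat \<Rightarrow> monomial \<Rightarrow> monomial \<Rightarrow> nat" where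
  "gdeg n g a = (\<Sum>k<n. min (g k) (a k))"

definition lexgt :: "nat \<Rightarrow> monomial \<Rightarrow> monomial \<Rightarrow> bool" where
  "lexgt n u v \<longleftrightarrow> (\<exists>i0<n. (\<forall>i<i0. u i = v i) \<and> v i0 < u i0)"

lemma sum_two:
  fixes F F' :: "nat \<Rightarrow> int"
  assumes "p < n" "q < n" "p \<noteq> q" "\<And>k. k < n \<Longrightarrow> k \<noteq> p \<Longrightarrow> k \<noteq> q \<Longrightarrow> F' k = F k"
  shows "(\<Sum>k<n. F' k) = (\<Sum>k<n. F k) + (F' p - F p) + (F' q - F q)"
proof -
  have A: "(\<Sum>k<n. H k) = H p + H q + (\<Sum>k\<in>{..<n} - {p} - {q}. H k)" for H :: "nat \<Rightarrow> int"
  proof -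
    have "(\<Sum>k<n. H k) = H p + (\<Sum>k\<in>{..<n} - {p}. H k)"
      using assms(1) by (subst sum.remove[of _ p]) auto
    also have "(\<Sum>k\<in>{..<n} - {p}. H k) = H q + (\<Sum>k\<in>{..<n} - {p} - {q}. H k)"
      using assms(2,3) by (subst sum.remove[of _ q]) auto
    finally show ?thesis by simp
  qed
  have "(\<Sum>k\<in>{..<n} - {p} - {q}. F' k) = (\<Sum>k\<in>{..<n} - {p} - {q}. F k)"
    using assms(4) by (intro sum.cong) auto
  then show ?thesis using A[of F] A[of F'] by simp
qed

lemma gdeg_int: "int (gdeg n g a) = (\<Sum>k<n. int (min (g k) (a k)))"
  unfolding gdeg_def by simp

lemma gdeg_two:
  assumes "p < n" "q < n" "p \<noteq> q" "\<And>k. k < n \<Longrightarrow> k \<noteq> p \<Longrightarrow> k \<noteq> q \<Longrightarrow> g' k = g k \<and> a' k = a k"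
  shows "int (gdeg n g' a') = int (gdeg n g a)
     + (int (min (g' p) (a' p)) - int (min (g p) (a p)))
     + (int (min (g' q) (a' q)) - int (min (g q) (a q)))"
  unfolding gdeg_int using assms by (intro sum_two) auto

lemma gdeg_le: "gdeg n g a \<le> mdeg n g"
  unfolding gdeg_def mdeg_def by (intro sum_mono) auto

lemma gdeg_eq: "mdvd g a \<Longrightarrow> gdeg n g a = mdeg n g"
  unfolding gdeg_def mdeg_def mdvd_def by (intro sum.cong) (auto simp: min_def)

lemma gdeg_less:
  assumes "g \<in> mons n" "\<not> mdvd g a"
  shows "gdeg n g a < mdeg n g"
proof -
  obtain k where k: "a k < g k" using assms(2) unfolding mdvd_def by (auto simp: not_le)
  have "k < n"
  proof (rule ccontr)
    assume "\<not> k < n" then have "g k = 0" using assms(1) by (simp add: mons_def)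
    then show False using k by simp
  qed
  then show ?thesis unfolding gdeg_def mdeg_def using k
    by (intro sum_strict_mono_ex1) (auto intro!: bexI[of _ k])
qed

locale cpm =
  fixes n :: nat and M :: "monomial set"
  assumes mi: "monomial_ideal n M"
    and cps: "componentwise_polymatroidal_sep n M"
begin

definition Bd :: "nat \<Rightarrow> monomial set" where
  "Bd d = {a \<in> M. mdeg n a = d}"

lemma M_mons: "a \<in> M \<Longrightarrow> a \<in> mons n"
  using mi unfolding monomial_ideal_def by blast

lemma M_up:
  assumes "a \<in> M" "mdvd a b" "b \<in> mons n"
  shows "b \<in> M"
proof -
  define w where "w = (\<lambda>k. b k - a k)"
  have "w \<in> mons n" using assms(3) unfolding w_def mons_def by auto
  moreover have "mmul a w = b" using assms(2) unfolding mmul_def w_def mdvd_def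
    by (auto simp: fun_eq_iff)
  ultimately show ?thesis using mi assms(1) unfolding monomial_ideal_def by metis
qed

lemma mulvar_M: "a \<in> M \<Longrightarrow> i < n \<Longrightarrow> mulvar i a \<in> M"
  by (rule M_up[of a]) (auto simp: mdvd_def mulvar_def mons_def dest!: M_mons)

lemma mdeg_mulvar: "i < n \<Longrightarrow> mdeg n (mulvar i a) = Suc (mdeg n a)"
  using mdeg_int_upd[of i n a "Suc (a i)"] unfolding mulvar_def by simp

lemma comp_deg:
  assumes "x \<in> comp n M d" "mdeg n x = d" shows "x \<in> M"
proof -
  obtain u where u: "x \<in> mons n" "u \<in> M" "mdeg n u = d" "mdvd u x"
    using assms(1) unfolding comp_def by blast
  have "u = x" by (rule mdvd_eq_deg[OF u(4) u(1)]) (use u assms in simp)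
  then show ?thesis using u by simp
qed

lemma gens_comp: "gens (comp n M d) = Bd d"
proof
  show "gens (comp n M d) \<subseteq> Bd d"
  proof
    fix a assume a: "a \<in> gens (comp n M d)"
    then obtain u where u: "u \<in> M" "mdeg n u = d" "mdvd u a" "a \<in> mons n"
      unfolding gens_def comp_def by blast
    have "u \<in> comp n M d" using u M_mons unfolding comp_def by auto
    then have "u = a" using a u(3) unfolding gens_def by blast
    then show "a \<in> Bd d" using u unfolding Bd_def by blast
  qed
next
  show "Bd d \<subseteq> gens (comp n M d)"
  proof
    fix a assume a: "a \<in> Bd d"
    have ac: "a \<in> comp n M d" using a M_mons unfolding Bd_def comp_def by auto
    have "b = a" if bc: "b \<in> comp n M d" and ba: "mdvd b a" for b
    proof -
      obtain u where "u \<in> M" "mdeg n u = d" "mdvd u b" using bc unfolding comp_def by blast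
      then have "d \<le> mdeg n b" using mdeg_mono by metis
      moreover have "mdeg n b \<le> d" using mdeg_mono[OF ba, of n] a unfolding Bd_def by simp
      moreover have "a \<in> mons n" using a M_mons unfolding Bd_def by auto
      ultimately show "b = a" using mdvd_eq_deg[OF ba, of n] a unfolding Bd_def by auto
    qed
    then show "a \<in> gens (comp n M d)" using ac unfolding gens_def by blast
  qed
qed

lemma SE:
  assumes "a \<in> Bd d" "b \<in> Bd d" "i < n" "j < n" "b i < a i" "a j < b j"
  shows "exch i j a \<in> Bd d"
proof -
  have "a \<in> comp n M d" using assms(1) M_mons unfolding Bd_def comp_def by auto
  then have "strong_exchange n (comp n M d)" using cps unfolding componentwise_polymatroidal_sep_def by blast
  then have "exch i j a \<in> comp n M d"
    using assms gens_comp unfolding strong_exchange_def exch_def by blast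
  moreover have "i \<noteq> j" using assms by auto
  then have "mdeg n (exch i j a) = d" using mdeg_exch assms unfolding Bd_def by auto
  ultimately show ?thesis using comp_deg unfolding Bd_def by blast
qed

lemma gen_below:
  assumes "a \<in> M"
  shows "\<exists>b\<in>gens M. mdvd b a"
proof -
  obtain b where b: "b \<in> M \<and> mdvd b a" "\<And>c. c \<in> M \<and> mdvd c a \<Longrightarrow> mdeg n b \<le> mdeg n c"
    using ex_has_least_nat[of "\<lambda>b. b \<in> M \<and> mdvd b a" a "mdeg n"] assms by auto
  have "c = b" if "c \<in> M" "mdvd c b" for c
  proof -
    have "mdvd c a" using that b(1) mdvd_trans by blast
    then have "mdeg n b \<le> mdeg n c" using b(2) that by blast
    moreover have "mdeg n c \<le> mdeg n b" by (rule mdeg_mono[OF that(2)])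
    ultimately show ?thesis using mdvd_eq_deg[OF that(2), of n] M_mons b(1) by simp
  qed
  then show ?thesis using b(1) unfolding gens_def by blast
qed

lemma gens_fin: "finite (gens M)"
  by (rule antichain_fin[of _ n]) (auto simp: gens_def dest: M_mons)

definition G :: "nat \<Rightarrow> monomial set" where "G d = Bd (d - 1)"
definition L :: "nat \<Rightarrow> monomial set" where "L d = {a \<in> Bd d. \<exists>g\<in>G d. mdvd g a}"
definition hh :: "nat \<Rightarrow> monomial \<Rightarrow> nat" where
  "hh d a = Max (insert 0 ((\<lambda>g. gdeg n g a) ` G d))"

lemma G_fin: "finite (G d)"
  unfolding G_def Bd_def by (rule finite_subset[OF _ fin_deg[of n "d - 1"]]) (auto dest: M_mons)

lemma hh_ge: "g \<in> G d \<Longrightarrow> gdeg n g a \<le> hh d a"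
  unfolding hh_def using G_fin by (intro Max_ge) auto

lemma hh_att: "G d \<noteq> {} \<Longrightarrow> \<exists>g\<in>G d. gdeg n g a = hh d a"
proof -
  assume "G d \<noteq> {}"
  have "hh d a \<in> insert 0 ((\<lambda>g. gdeg n g a) ` G d)"
    unfolding hh_def using G_fin by (intro Max_in) auto
  moreover obtain g where "g \<in> G d" using \<open>G d \<noteq> {}\<close> by auto
  ultimately show ?thesis using hh_ge[of g d a] by auto
qed

lemma hh_empty: "G d = {} \<Longrightarrow> hh d a = 0"
  unfolding hh_def by simp

lemma L_hh:
  assumes "u \<in> L d" "v \<in> Bd d" "v \<notin> L d"
  shows "hh d v < hh d u"
proof -
  obtain g where g: "g \<in> G d" "mdvd g u" using assms(1) unfolding L_def by blast
  have "G d \<noteq> {}" using g by auto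
  then obtain g' where g': "g' \<in> G d" "gdeg n g' v = hh d v" using hh_att by blast
  have "\<not> mdvd g' v" using assms(2,3) g' unfolding L_def by blast
  then have "gdeg n g' v < mdeg n g'" using gdeg_less g' M_mons unfolding G_def Bd_def by blast
  also have "mdeg n g' = mdeg n g" using g g' unfolding G_def Bd_def by simp
  also have "\<dots> = gdeg n g u" using gdeg_eq[OF g(2)] by simp
  also have "\<dots> \<le> hh d u" using hh_ge g by blast
  finally show ?thesis using g' by simp
qed

lemma gens_notL:
  assumes "a \<in> gens M" "mdeg n a = d" "1 \<le> d"
  shows "a \<in> Bd d" "a \<notin> L d"
proof -
  show "a \<in> Bd d" using assms unfolding gens_def Bd_def by auto
  show "a \<notin> L d"
  proof
    assume "a \<in> L d"
    then obtain g where "g \<in> G d" "mdvd g a" unfolding L_def by blast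
    then have "g = a" "mdeg n g = d - 1" using assms(1) unfolding gens_def G_def Bd_def by auto
    then show False using assms by auto
  qed
qed

lemma notL_gens:
  assumes "a \<in> Bd d" "a \<notin> L d" "1 \<le> d"
  shows "a \<in> gens M"
proof -
  have "b = a" if bM: "b \<in> M" and ba: "mdvd b a" for b
  proof (rule ccontr)
    assume "b \<noteq> a"
    have an: "a \<in> mons n" using assms M_mons unfolding Bd_def by auto
    have "mdeg n b < d" using mdvd_neq_deg[OF ba an \<open>b \<noteq> a\<close>] assms unfolding Bd_def by simp
    then obtain u where u: "mdvd b u" "mdvd u a" "mdeg n u = d - 1"
      using intermediate[OF ba an, of "d - 1"] assms unfolding Bd_def by fastforce
    have "u \<in> M" using M_up[OF bM u(1)] mdvd_mons[OF u(2) an] by blast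
    then have "u \<in> G d" using u unfolding G_def Bd_def by simp
    then have "a \<in> L d" using u assms unfolding L_def by blast
    then show False using assms by simp
  qed
  then show ?thesis using assms unfolding gens_def Bd_def by blast
qed

lemma S0:
  assumes "a \<in> Bd d" "v \<in> Bd d" "i < n" "j < n" "v i < a i" "a j < v j"
  shows "exch j i v \<in> Bd d"
  by (rule SE[OF assms(2,1) assms(4,3) assms(6,5)])

lemma S_Q:
  assumes "u \<in> Bd d" "v \<in> Bd d" "u \<noteq> v"
  shows "\<exists>j<n. u j < v j"
proof (rule ccontr)
  assume "\<not> (\<exists>j<n. u j < v j)"
  have um: "u \<in> mons n" "v \<in> mons n" using assms M_mons unfolding Bd_def by auto
  have "v k \<le> u k" for k
  proof (cases "k < n")
    case True
    then have "\<not> u k < v k" using \<open>\<not> (\<exists>j<n. u j < v j)\<close> by blast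
    then show ?thesis by simp
  next
    case False then show ?thesis using um by (simp add: mons_def)
  qed
  then have "mdvd v u" unfolding mdvd_def by blast
  then have "v = u" using mdvd_eq_deg[of v u n] assms M_mons unfolding Bd_def by auto
  then show False using assms by simp
qed

lemma exch_apply2: "i \<noteq> j \<Longrightarrow> exch j i v k = (if k = i then Suc (v i) else if k = j then v j - 1 else v k)"
  by (auto simp: exch_apply)

lemma lex_j:
  fixes i0 j :: nat and u v :: monomial
  assumes "\<forall>i<i0. u i = v i" "v i0 < u i0" "u j < v j"
  shows "i0 < j"
proof (rule ccontr)
  assume "\<not> i0 < j"
  then have "j < i0 \<or> j = i0" by linarith
  then show False
  proof
    assume "j < i0" then show False using assms by auto
  next
    assume "j = i0" then show False using assms by auto
  qed
qed

lemma lex_y: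
  assumes "i0 < j" "i0 < n"
  shows "lexgt n (exch j i0 v) v"
  unfolding lexgt_def using assms
  by (intro exI[of _ i0]) (auto simp: exch_apply2)

lemma mdeg_int: "int (mdeg n a) = (\<Sum>k<n. int (a k))"
  unfolding mdeg_def by simp

definition goodY :: "nat \<Rightarrow> monomial \<Rightarrow> monomial \<Rightarrow> bool" where
  "goodY d v y \<longleftrightarrow> y \<in> Bd d \<and> (y \<in> L d \<or> hh d v < hh d y \<or> (hh d v \<le> hh d y \<and> lexgt n y v))"

lemma claimC:
  assumes d1: "1 \<le> d" and vB: "v \<in> Bd d" and vL: "v \<notin> L d"
  shows "u \<in> Bd d \<Longrightarrow> u \<in> L d \<or> hh d v < hh d u \<or> (hh d u = hh d v \<and> lexgt n u v) \<Longrightarrow>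
    \<exists>i<n. \<exists>j<n. v i < u i \<and> 0 < v j \<and> i \<noteq> j \<and> goodY d v (exch j i v)"
proof (induction "\<Sum>k<n. u k - v k" arbitrary: u rule: less_induct)
  case less
  note uB = less.prems(1) and key = less.prems(2)
  have vm: "v \<in> mons n" using vB M_mons unfolding Bd_def by auto
  have um: "u \<in> mons n" using uB M_mons unfolding Bd_def by auto
  have uv: "u \<noteq> v" using key vL unfolding lexgt_def by auto
  show ?case
  proof (cases "G d = {}")
    case True
    then have hz: "hh d a = 0" for a by (rule hh_empty)
    have "L d = {}" using True unfolding L_def by auto
    then obtain i0 where i0: "i0 < n" "\<forall>i<i0. u i = v i" "v i0 < u i0"
      using key hz unfolding lexgt_def by auto
    obtain j where j: "j < n" "u j < v j" using S_Q[OF uB vB uv] by blast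
    have ij: "i0 < j" using lex_j[OF i0(2,3) j(2)] .
    have yB: "exch j i0 v \<in> Bd d" using S0[OF uB vB i0(1) j(1) i0(3) j(2)] .
    have "lexgt n (exch j i0 v) v" using lex_y[OF ij i0(1)] .
    then have "goodY d v (exch j i0 v)" using yB hz unfolding goodY_def by simp
    then show ?thesis using i0 j ij by (intro exI[of _ i0] conjI exI[of _ j]) auto
  next
    case False
    obtain g0 where g0: "g0 \<in> G d" "gdeg n g0 u = hh d u" using hh_att[OF False] by blast
    define md where "md a = (\<Sum>k<n. (a k - g0 k) + (g0 k - a k))" for a :: monomial
    obtain g0' where "g0' \<in> G d" "gdeg n g0' v = hh d v" using hh_att[OF False] by blast
    then obtain g where g: "g \<in> G d" "gdeg n g v = hh d v"
      and gmin: "\<And>g'. g' \<in> G d \<and> gdeg n g' v = hh d v \<Longrightarrow> md g \<le> md g'"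
      using ex_has_least_nat[of "\<lambda>g. g \<in> G d \<and> gdeg n g v = hh d v" g0' md] by blast
    have gB: "g \<in> Bd (d - 1)" and g0B: "g0 \<in> Bd (d - 1)" using g g0 unfolding G_def by auto
    have gm: "g \<in> mons n" and g0m: "g0 \<in> mons n" using gB g0B M_mons unfolding Bd_def by auto
    have gdeg_g: "mdeg n g = d - 1" and gdeg_g0: "mdeg n g0 = d - 1" using gB g0B unfolding Bd_def by auto
    have min_prop: "v k \<le> g k \<and> g m \<le> v m"
      if km: "k < n" "m < n" "g k < g0 k" "g0 m < g m" for k m
    proof (rule ccontr)
      assume nc: "\<not> (v k \<le> g k \<and> g m \<le> v m)"
      have kmne: "k \<noteq> m" using km by auto
      define g' where "g' = exch m k g"
      have g'B: "g' \<in> Bd (d - 1)" unfolding g'_def by (rule SE[OF gB g0B km(2,1) km(4,3)])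
      have g'k: "g' k = Suc (g k)" and g'm: "g' m = g m - 1"
        and g'o: "\<And>t. t \<noteq> k \<Longrightarrow> t \<noteq> m \<Longrightarrow> g' t = g t"
        unfolding g'_def using kmne by (auto simp: exch_apply)
      have "int (gdeg n g' v) = int (gdeg n g v)
        + (int (min (g' k) (v k)) - int (min (g k) (v k)))
        + (int (min (g' m) (v m)) - int (min (g m) (v m)))"
        by (rule gdeg_two) (use km kmne g'o in auto)
      also have "\<dots> \<ge> int (gdeg n g v)"
        using nc g'k g'm km by (auto simp: min_def)
      finally have "gdeg n g v \<le> gdeg n g' v" by simp
      moreover have "gdeg n g' v \<le> hh d v" using hh_ge g'B unfolding G_def by blast
      ultimately have "gdeg n g' v = hh d v" using g by simp
      then have "md g \<le> md g'" using gmin g'B unfolding G_def by blast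
      moreover have "md g' < md g"
        unfolding md_def
      proof (rule sum_strict_mono_ex1)
        show "finite {..<n}" by simp
        show "\<forall>t\<in>{..<n}. g' t - g0 t + (g0 t - g' t) \<le> g t - g0 t + (g0 t - g t)"
        proof
          fix t assume "t \<in> {..<n}"
          show "g' t - g0 t + (g0 t - g' t) \<le> g t - g0 t + (g0 t - g t)"
          proof (cases "t = k")
            case True then show ?thesis using g'k km by simp
          next
            case False
            then show ?thesis
            proof (cases "t = m")
              case True then show ?thesis using g'm km by simp
            next
              case False then show ?thesis using g'o \<open>t \<noteq> k\<close> by simp
            qed
          qed
        qed
        show "\<exists>t\<in>{..<n}. g' t - g0 t + (g0 t - g' t) < g t - g0 t + (g0 t - g t)"
          using g'k km by (intro bexI[of _ k]) auto
      qed
      ultimately show False by simp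
    qed
    have exK: "\<exists>k<n. g k < g0 k" if m: "m < n" "g0 m < g m" for m
    proof (rule ccontr)
      assume "\<not> (\<exists>k<n. g k < g0 k)"
      then have "g0 t \<le> g t" for t
        using g0m gm by (cases "t < n") (auto simp: mons_def not_less)
      then have "mdvd g0 g" unfolding mdvd_def by blast
      then have "g0 = g" using mdvd_eq_deg[OF _ gm] gdeg_g gdeg_g0 by simp
      then show False using m by simp
    qed
    show ?thesis
    proof (cases "\<exists>i<n. v i < u i \<and> v i < g i")
      case True
      then obtain i where i: "i < n" "v i < u i" "v i < g i" by blast
      have "\<exists>j<n. g j < v j"
      proof (rule ccontr)
        assume "\<not> (\<exists>j<n. g j < v j)"
        then have "v t \<le> g t" if "t < n" for t using that by (meson not_less)
        then have "mdeg n v \<le> mdeg n g" unfolding mdeg_def by (intro sum_mono) auto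
        then show False using gdeg_g vB d1 unfolding Bd_def by simp
      qed
      then obtain j where j: "j < n" "g j < v j" by blast
      have ij: "i \<noteq> j" using i j by auto
      have aB: "mulvar i g \<in> Bd d"
        using mulvar_M[of g i] gB i d1 mdeg_mulvar[of i g] unfolding Bd_def by auto
      have yB: "exch j i v \<in> Bd d"
        by (rule S0[OF aB vB i(1) j(1)]) (use i j ij in \<open>auto simp: mulvar_def\<close>)
      have "int (gdeg n g (exch j i v)) = int (gdeg n g v)
        + (int (min (g i) (exch j i v i)) - int (min (g i) (v i)))
        + (int (min (g j) (exch j i v j)) - int (min (g j) (v j)))"
        by (rule gdeg_two) (use i j ij in \<open>auto simp: exch_apply2\<close>)
      also have "\<dots> = int (gdeg n g v) + 1"
        using i j ij by (auto simp: exch_apply2 min_def)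
      finally have "hh d v < gdeg n g (exch j i v)" using g by simp
      also have "\<dots> \<le> hh d (exch j i v)" using hh_ge g by blast
      finally have "goodY d v (exch j i v)" using yB unfolding goodY_def by simp
      then show ?thesis using i j ij by (intro exI[of _ i] conjI exI[of _ j]) auto
    next
      case False
      then have nA: "\<And>i. i < n \<Longrightarrow> v i < u i \<Longrightarrow> g i \<le> v i" by (meson not_less)
      define F where "F k = int (min (g0 k) (u k)) - int (min (g k) (v k))" for k
      define D where "D k = int (g0 k) - int (g k)" for k
      have FD: "F k \<le> D k" if k: "k < n" for k
      proof (cases "g k \<le> v k")
        case True then show ?thesis unfolding F_def D_def by (auto simp: min_def)
      next
        case False
        then have "u k \<le> v k" using nA[OF k] by (meson not_le not_less)
        then have "F k \<le> 0" using False unfolding F_def by (auto simp: min_def)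
        moreover have "g k \<le> g0 k"
        proof (rule ccontr)
          assume "\<not> g k \<le> g0 k"
          then have gg: "g0 k < g k" by simp
          then obtain k' where k': "k' < n" "g k' < g0 k'" using exK[OF k] by blast
          then have "g k \<le> v k" using min_prop[OF k'(1) k k'(2) gg] by simp
          then show False using False by simp
        qed
        ultimately show ?thesis unfolding D_def by simp
      qed
      have sF: "(\<Sum>k<n. F k) = int (hh d u) - int (hh d v)"
        unfolding F_def sum_subtractf gdeg_int[symmetric] using g g0 by simp
      have sD: "(\<Sum>k<n. D k) = 0"
        unfolding D_def sum_subtractf mdeg_int[symmetric] using gdeg_g gdeg_g0 by simp
      have "(\<Sum>k<n. F k) \<le> (\<Sum>k<n. D k)" using FD by (intro sum_mono) auto
      then have hle: "hh d u \<le> hh d v" using sF sD by simp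
      then have uL: "u \<notin> L d" using L_hh[OF _ vB vL, of u] by linarith
      then obtain i0 where i0: "i0 < n" "\<forall>i<i0. u i = v i" "v i0 < u i0" "hh d u = hh d v"
        using key hle unfolding lexgt_def by auto
      have tight: "F k = D k" if k: "k < n" for k
      proof (rule ccontr)
        assume "F k \<noteq> D k"
        then have "F k < D k" using FD[OF k] by simp
        then have "(\<Sum>k<n. F k) < (\<Sum>k<n. D k)"
          using FD k by (intro sum_strict_mono_ex1) auto
        then show False using sF sD i0(4) by simp
      qed
      show ?thesis
      proof (cases "\<exists>j<n. u j < v j \<and> g j < v j")
        case True
        then obtain j where j: "j < n" "u j < v j" "g j < v j" by blast
        have ij: "i0 < j" using lex_j[OF i0(2,3) j(2)] .
        have yB: "exch j i0 v \<in> Bd d" using S0[OF uB vB i0(1) j(1) i0(3) j(2)] .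
        have gi0: "g i0 \<le> v i0" using nA i0 by blast
        have "int (gdeg n g (exch j i0 v)) = int (gdeg n g v)
          + (int (min (g i0) (exch j i0 v i0)) - int (min (g i0) (v i0)))
          + (int (min (g j) (exch j i0 v j)) - int (min (g j) (v j)))"
          by (rule gdeg_two) (use i0 j ij in \<open>auto simp: exch_apply2\<close>)
        also have "\<dots> = int (gdeg n g v)"
          using i0 j ij gi0 by (auto simp: exch_apply2 min_def)
        finally have "hh d v \<le> gdeg n g (exch j i0 v)" using g by simp
        also have "\<dots> \<le> hh d (exch j i0 v)" using hh_ge g by blast
        finally have "goodY d v (exch j i0 v)"
          using yB lex_y[OF ij i0(1)] unfolding goodY_def by simp
        then show ?thesis using i0 j ij by (intro exI[of _ i0] conjI exI[of _ j]) auto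
      next
        case False
        then have nC: "\<And>j. j < n \<Longrightarrow> u j < v j \<Longrightarrow> v j \<le> g j" by (meson not_less)
        obtain j where j: "j < n" "u j < v j" using S_Q[OF uB vB uv] by blast
        have ij: "i0 < j" using lex_j[OF i0(2,3) j(2)] .
        have vgj: "v j \<le> g j" using nC j by blast
        have g0j: "g0 j < g j"
        proof (rule ccontr)
          assume "\<not> g0 j < g j"
          then have "D j \<ge> 0" unfolding D_def by simp
          moreover have "F j < 0" using j vgj unfolding F_def by (auto simp: min_def)
          ultimately show False using tight[OF j(1)] by simp
        qed
        obtain k where k: "k < n" "g k < g0 k" using exK[OF j(1) g0j] by blast
        have gjv: "g j = v j" using min_prop[OF k(1) j(1) k(2) g0j] vgj by simp
        show ?thesis
        proof (cases "g i0 < g0 i0")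
          case True
          have gi0: "g i0 = v i0" using min_prop[OF i0(1) j(1) True g0j] nA[OF i0(1,3)] by simp
          have ne: "i0 \<noteq> j" using ij by simp
          define g' where "g' = exch j i0 g"
          have g'B: "g' \<in> Bd (d - 1)" unfolding g'_def by (rule SE[OF gB g0B j(1) i0(1) g0j True])
          have yB: "exch j i0 v \<in> Bd d" using S0[OF uB vB i0(1) j(1) i0(3) j(2)] .
          have "int (gdeg n g' (exch j i0 v)) = int (gdeg n g v)
            + (int (min (g' i0) (exch j i0 v i0)) - int (min (g i0) (v i0)))
            + (int (min (g' j) (exch j i0 v j)) - int (min (g j) (v j)))"
            by (rule gdeg_two) (use i0 j ne in \<open>auto simp: exch_apply2 g'_def\<close>)
          also have "\<dots> = int (gdeg n g v)"
            using i0 j ne gi0 gjv by (auto simp: exch_apply2 g'_def min_def)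
          finally have "hh d v \<le> gdeg n g' (exch j i0 v)" using g by simp
          also have "\<dots> \<le> hh d (exch j i0 v)" using hh_ge g'B unfolding G_def by blast
          finally have "goodY d v (exch j i0 v)"
            using yB lex_y[OF ij i0(1)] unfolding goodY_def by simp
          moreover have "0 < v j" using j by simp
          ultimately show ?thesis using i0 j ne by (intro exI[of _ i0] conjI exI[of _ j]) auto
        next
          case False
          have ki0: "k \<noteq> i0" using False k by auto
          have vk: "v k \<le> g k" using min_prop[OF k(1) j(1) k(2) g0j] by simp
          have gkv: "g k = v k"
          proof (rule ccontr)
            assume "g k \<noteq> v k"
            then have "v k < g k" using vk by simp
            then have "u k \<le> v k" using nA[OF k(1)] by (meson not_le not_less)
            then have "F k \<le> 0" using \<open>v k < g k\<close> unfolding F_def by (auto simp: min_def)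
            moreover have "D k > 0" using k unfolding D_def by simp
            ultimately show False using tight[OF k(1)] by simp
          qed
          have uk: "v k < u k"
          proof -
            have "int (min (g0 k) (u k)) = int (g0 k)" using tight[OF k(1)] gkv unfolding F_def D_def
              by (simp add: min_def)
            then have "g0 k \<le> u k" by (simp add: min_def split: if_splits)
            then show ?thesis using k gkv by simp
          qed
          have kj: "k \<noteq> j" using uk j by auto
          define u' where "u' = exch k j u"
          define g0' where "g0' = exch k j g0"
          have u'B: "u' \<in> Bd d" unfolding u'_def by (rule SE[OF uB vB k(1) j(1) uk j(2)])
          have g0'B: "g0' \<in> Bd (d - 1)" unfolding g0'_def by (rule SE[OF g0B gB k(1) j(1) k(2) g0j])
          have "int (gdeg n g0' u') = int (gdeg n g0 u)
            + (int (min (g0' k) (u' k)) - int (min (g0 k) (u k)))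
            + (int (min (g0' j) (u' j)) - int (min (g0 j) (u j)))"
            by (rule gdeg_two) (use k j kj in \<open>auto simp: exch_apply u'_def g0'_def\<close>)
          also have "\<dots> = int (gdeg n g0 u)"
            using k j kj uk gkv by (auto simp: exch_apply u'_def g0'_def min_def)
          finally have "hh d u \<le> gdeg n g0' u'" using g0 by simp
          also have "\<dots> \<le> hh d u'" using hh_ge g0'B unfolding G_def by blast
          finally have hu': "hh d v \<le> hh d u'" using i0 by simp
          have ki: "i0 < k"
          proof (rule ccontr)
            assume "\<not> i0 < k"
            then have "k < i0" using ki0 by simp
            then show False using i0(2) uk by simp
          qed
          have lex': "lexgt n u' v"
            unfolding lexgt_def using i0 ki ij kj
            by (intro exI[of _ i0]) (auto simp: u'_def exch_apply)
          have key': "u' \<in> L d \<or> hh d v < hh d u' \<or> (hh d u' = hh d v \<and> lexgt n u' v)"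
            using hu' lex' by auto
          have less': "(\<Sum>k<n. u' k - v k) < (\<Sum>k<n. u k - v k)"
          proof (rule sum_strict_mono_ex1)
            show "finite {..<n}" by simp
            show "\<forall>t\<in>{..<n}. u' t - v t \<le> u t - v t"
              using kj j uk by (auto simp: u'_def exch_apply)
            show "\<exists>t\<in>{..<n}. u' t - v t < u t - v t"
              using kj k uk by (intro bexI[of _ k]) (auto simp: u'_def exch_apply)
          qed
          obtain i j' where ij': "i < n" "j' < n" "v i < u' i" "0 < v j'" "i \<noteq> j'" "goodY d v (exch j' i v)"
            using less.hyps[OF less' u'B key'] by blast
          have "v i < u i"
          proof (cases "i = j")
            case True then show ?thesis using ij' kj j by (simp add: u'_def exch_apply)
          next
            case False then show ?thesis using ij' kj by (auto simp: u'_def exch_apply split: if_splits)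
          qed
          then show ?thesis using ij' by blast
        qed
      qed
    qed
  qed
qed

definition lexl :: "monomial \<Rightarrow> int list" where
  "lexl a = map (\<lambda>i. - int (a i)) [0..<n]"

definition key :: "monomial \<Rightarrow> nat \<times> int \<times> int list" where
  "key a = (mdeg n a, - int (hh (mdeg n a) a), lexl a)"

lemma lexl_less: "lexl u < lexl v \<longleftrightarrow> lexgt n u v"
proof -
  have tk: "take i (lexl a) = map (\<lambda>i. - int (a i)) [0..<i]" if "i \<le> n" for i a
    unfolding lexl_def using that by (simp add: take_map)
  have "lexl u < lexl v \<longleftrightarrow>
    (\<exists>i. i < n \<and> take i (lexl u) = take i (lexl v) \<and> lexl u ! i < lexl v ! i)"
    unfolding list_less_def lexord_take_index_conv by (simp add: lexl_def)
  also have "\<dots> \<longleftrightarrow> (\<exists>i<n. (\<forall>k<i. u k = v k) \<and> v i < u i)"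
  proof -
    have "take i (lexl u) = take i (lexl v) \<longleftrightarrow> (\<forall>k<i. u k = v k)" if "i < n" for i
      using that by (auto simp: tk)
    moreover have "lexl u ! i < lexl v ! i \<longleftrightarrow> v i < u i" if "i < n" for i
      using that by (simp add: lexl_def)
    ultimately show ?thesis by (meson less_imp_le_nat)
  qed
  finally show ?thesis unfolding lexgt_def .
qed

lemma key_inj:
  assumes "a \<in> mons n" "b \<in> mons n" "key a = key b"
  shows "a = b"
proof
  fix t
  have l: "lexl a = lexl b" using assms(3) unfolding key_def by simp
  show "a t = b t"
  proof (cases "t < n")
    case True
    then have "lexl a ! t = lexl b ! t" using l by simp
    then show ?thesis using True by (simp add: lexl_def)
  next
    case False then show ?thesis using assms(1,2) by (simp add: mons_def)
  qed
qed

lemma earlier: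
  assumes vG: "v \<in> gens M" and bG: "b \<in> gens M" and kb: "key b < key v"
    and dv: "mdvd b (mmul w v)"
  shows "\<exists>i<n. 1 \<le> w i \<and> (\<exists>c\<in>gens M. key c < key v \<and> mdvd c (mulvar i v))"
proof -
  define d where "d = mdeg n v"
  have vM: "v \<in> M" and bM: "b \<in> M" using vG bG unfolding gens_def by auto
  have vm: "v \<in> mons n" and bm: "b \<in> mons n" using vM bM M_mons by auto
  have bv: "b \<noteq> v" using kb by auto
  have bd: "mdeg n b \<le> d" using kb unfolding key_def d_def by auto
  have d1: "1 \<le> d"
  proof (rule ccontr)
    assume "\<not> 1 \<le> d"
    then have "d = 0" by simp
    then have "v k = 0" for k
    proof (cases "k < n")
      case True
      then show ?thesis using coord_le_mdeg[OF True, of v] \<open>d = 0\<close> unfolding d_def by simp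
    next
      case False then show ?thesis using vm by (simp add: mons_def)
    qed
    then have "mdvd v b" unfolding mdvd_def by simp
    then have "v = b" using bG vM unfolding gens_def by blast
    then show False using bv by simp
  qed
  have vB: "v \<in> Bd d" and vL: "v \<notin> L d" using gens_notL[OF vG d_def[symmetric] d1] by auto
  obtain u where uB: "u \<in> Bd d"
    and ukey: "u \<in> L d \<or> hh d v < hh d u \<or> (hh d u = hh d v \<and> lexgt n u v)"
    and ub: "\<And>i. v i < u i \<Longrightarrow> v i < b i"
  proof (cases "mdeg n b = d")
    case True
    have "b \<in> Bd d" using bM True unfolding Bd_def by simp
    moreover have "hh d v < hh d b \<or> (hh d b = hh d v \<and> lexgt n b v)"
      using kb True unfolding key_def d_def lexl_less[symmetric] by auto
    ultimately show ?thesis using that by blast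
  next
    case False
    then have bl: "mdeg n b < d" using bd by simp
    define c where "c = (\<lambda>k. max (b k) (v k))"
    have cm: "c \<in> mons n" using bm vm unfolding c_def mons_def by auto
    have bc: "mdvd b c" and vc: "mdvd v c" unfolding c_def mdvd_def by auto
    have "d \<le> mdeg n c" using mdeg_mono[OF vc] unfolding d_def by simp
    then obtain u where u: "mdvd b u" "mdvd u c" "mdeg n u = d"
      using intermediate[OF bc cm, of d] bl by auto
    have um: "u \<in> mons n" using mdvd_mons[OF u(2) cm] .
    have uM: "u \<in> M" using M_up[OF bM u(1) um] .
    obtain g where g: "mdvd b g" "mdvd g u" "mdeg n g = d - 1"
      using intermediate[OF u(1) um, of "d - 1"] bl u(3) by fastforce
    have "g \<in> M" using M_up[OF bM g(1) mdvd_mons[OF g(2) um]] .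
    then have "u \<in> L d" using g u uM unfolding L_def G_def Bd_def by auto
    moreover have "u \<in> Bd d" using uM u unfolding Bd_def by simp
    moreover have "v i < b i" if "v i < u i" for i
      using that u(2) unfolding mdvd_def c_def by (metis max_def not_le order.strict_trans2)
    ultimately show ?thesis using that by blast
  qed
  obtain i j where ij: "i < n" "j < n" "v i < u i" "0 < v j" "i \<noteq> j" "goodY d v (exch j i v)"
    using claimC[OF d1 vB vL uB ukey] by blast
  have "v i < b i" using ub ij(3) .
  moreover have "b i \<le> w i + v i" using dv unfolding mdvd_def mmul_def by blast
  ultimately have wi: "1 \<le> w i" by simp
  define y where "y = exch j i v"
  have ydv: "mdvd y (mulvar i v)"
    unfolding mdvd_def y_def mulvar_def using ij by (auto simp: exch_apply2)
  have yB: "y \<in> Bd d" using ij(6) unfolding goodY_def y_def by simp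
  have "\<exists>c\<in>gens M. key c < key v \<and> mdvd c (mulvar i v)"
  proof (cases "y \<in> L d")
    case True
    then obtain g where g: "g \<in> G d" "mdvd g y" unfolding L_def by blast
    then have gM: "g \<in> M" "mdeg n g = d - 1" unfolding G_def Bd_def by auto
    obtain c where c: "c \<in> gens M" "mdvd c g" using gen_below[OF gM(1)] by blast
    have "mdeg n c \<le> d - 1" using mdeg_mono[OF c(2), of n] gM by simp
    then have "mdeg n c < d" using d1 by linarith
    then have "key c < key v" unfolding key_def d_def[symmetric] by simp
    moreover have "mdvd c (mulvar i v)" using c(2) g(2) ydv mdvd_trans by blast
    ultimately show ?thesis using c by blast
  next
    case False
    have yG: "y \<in> gens M" using notL_gens[OF yB False d1] .
    have yd: "mdeg n y = d" using yB unfolding Bd_def by simp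
    have "hh d v < hh d y \<or> (hh d v \<le> hh d y \<and> lexgt n y v)"
      using ij(6) False unfolding goodY_def y_def by simp
    then have "key y < key v"
      unfolding key_def yd d_def[symmetric] lexl_less[symmetric] by auto
    then show ?thesis using yG ydv by blast
  qed
  then show ?thesis using wi ij(1) by blast
qed

lemma main: "linear_quotients n M"
proof -
  obtain xs where xs: "set xs = gens M" "distinct xs"
    using finite_distinct_list[OF gens_fin] by blast
  define vs where "vs = sort_key key xs"
  have vsd: "distinct vs" and vss: "set vs = gens M" using xs unfolding vs_def by auto
  have srt: "sorted (map key vs)" unfolding vs_def by simp
  have gm: "a \<in> gens M \<Longrightarrow> a \<in> mons n" for a using M_mons unfolding gens_def by auto
  have vsG: "vs ! l \<in> gens M" if "l < length vs" for l using that vss nth_mem by blast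
  have ordk: "key (vs ! l) < key (vs ! k)" if lk: "l < k" "k < length vs" for l k
  proof -
    have "key (vs ! l) \<le> key (vs ! k)"
      using sorted_nth_mono[OF srt, of l k] lk by simp
    moreover have "vs ! l \<noteq> vs ! k" using vsd lk nth_eq_iff_index_eq by fastforce
    then have "key (vs ! l) \<noteq> key (vs ! k)"
      using key_inj gm vsG lk by (meson order.strict_trans)
    ultimately show ?thesis by simp
  qed
  have bk: "\<exists>l<k. vs ! l = c" if c: "c \<in> gens M" "key c < key (vs ! k)" and k: "k < length vs" for c k
  proof -
    obtain l where l: "l < length vs" "vs ! l = c" using c vss by (metis in_set_conv_nth)
    have "l < k"
    proof (rule ccontr)
      assume "\<not> l < k"
      then have "k \<le> l" by simp
      then have "key (vs ! k) \<le> key (vs ! l)" using sorted_nth_mono[OF srt, of k l] l by simp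
      then show False using c l by simp
    qed
    then show ?thesis using l by blast
  qed
  have "\<exists>S\<subseteq>{..<n}. colon_prefix n vs k = var_ideal n S" if k: "0 < k" "k < length vs" for k
  proof -
    define v where "v = vs ! k"
    define S where "S = {j. j < n \<and> (\<exists>l<k. mdvd (vs ! l) (mulvar j v))}"
    have "colon_prefix n vs k = var_ideal n S"
    proof
      show "colon_prefix n vs k \<subseteq> var_ideal n S"
      proof
        fix w assume "w \<in> colon_prefix n vs k"
        then obtain l where l: "w \<in> mons n" "l < k" "mdvd (vs ! l) (mmul w v)"
          unfolding colon_prefix_def v_def by blast
        obtain i c where ic: "i < n" "1 \<le> w i" "c \<in> gens M" "key c < key v" "mdvd c (mulvar i v)"
        proof -
          have lv: "l < length vs" using l k by simp
          show ?thesis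
            using earlier[OF vsG[OF k(2)] vsG[OF lv] ordk[OF l(2) k(2)], of w] l(3) that
            unfolding v_def by blast
        qed
        obtain l' where "l' < k" "vs ! l' = c" using bk[OF ic(3) _ k(2)] ic(4) unfolding v_def by blast
        then have "i \<in> S" using ic unfolding S_def by blast
        then show "w \<in> var_ideal n S" using l ic unfolding var_ideal_def by blast
      qed
    next
      show "var_ideal n S \<subseteq> colon_prefix n vs k"
      proof
        fix w assume "w \<in> var_ideal n S"
        then obtain j where j: "w \<in> mons n" "j \<in> S" "1 \<le> w j" unfolding var_ideal_def by blast
        then obtain l where l: "l < k" "mdvd (vs ! l) (mulvar j v)" unfolding S_def by blast
        have "mdvd (mulvar j v) (mmul w v)" using j unfolding mdvd_def mulvar_def mmul_def by auto
        then have "mdvd (vs ! l) (mmul w (vs ! k))" using l mdvd_trans unfolding v_def by blast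
        then show "w \<in> colon_prefix n vs k" using j l unfolding colon_prefix_def by blast
      qed
    qed
    moreover have "S \<subseteq> {..<n}" unfolding S_def by auto
    ultimately show ?thesis by blast
  qed
  then show ?thesis unfolding linear_quotients_def using vsd vss by blast
qed

end

theorem theorem3p8:
  fixes n :: nat and M :: "monomial set"
  assumes "monomial_ideal n M"
    and "componentwise_polymatroidal_sep n M"
  shows "linear_quotients n M"
proof -
  interpret cpm n M using assms by unfold_locales
  show ?thesis by (rule main)
qed

end
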